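(* Let $A \subset \mathbb{Z}^d$ be a finite set such that $A - A$ generates $\mathbb{Z}^d$ additively and its convex hull $\Delta_A$ is a $d$-dimensional simplex with vertices $v_1, \ldots, v_{d+1}$. Let $\widetilde{v} = (v,1) \in \mathbb{Z}^{d+1}$ denote the lift of $v \in \mathbb{Z}^d$, let $\mathcal{C}_A = \{\sum_{a \in A} n_a \widetilde{a} : n_a \in \mathbb{N}\}$, let $\Lambda = \mathrm{span}_{\mathbb{Z}}\{\widetilde{v}_1, \ldots, \widetilde{v}_{d+1}\}$, and for $\pi \in \mathbb{Z}^{d+1}$ let $\mathcal{S}_\pi$ be the set of elements of $\mathcal{C}_A$ congruent to $\pi$ modulo $\Lambda$. Call $(g, N) \in \mathcal{S}_\pi$ (with $g \in \mathbb{Z}^d$, $N \in \mathbb{N}$) a minimal element of $\mathcal{S}_\pi$ if $(g,N) - \widetilde{v}_i \notin \mathcal{C}_A$ for every $i = 1, \ldots, d+1$. Then every minimal element $(\alpha, M)$ of $\mathcal{S}_\pi$ satisfies \[ M \leq \mathrm{vol}(\Delta_A)\cdot d! - 1 . \] In particular, $\mathcal{S}_\pi$ has finitely many minimal elements.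
   Context: $\mathbb{N} = \{0,1,2,\ldots\}$. For a point $(g,N) \in \mathbb{Z}^d \times \mathbb{Z}$ the last coordinate $N$ is called its height. $\mathrm{vol}(\Delta_A)$ is the $d$-dimensional volume of the convex hull of $A$. *)

theory Defs
  imports "HOL-Analysis.Analysis"
begin

text \<open>Integer points of Z^d are vectors int^'d; d = CARD('d).
  Points of Z^(d+1) are pairs (g, N) :: (int^'d) \<times> int, N being the height.\<close>

definition rvec :: "int^'d \<Rightarrow> real^'d" where
  "rvec x = (\<chi> i. real_of_int (x $ i))"

definition lift :: "int^'d \<Rightarrow> (int^'d) \<times> int" where
  "lift v = (v, 1)"

definition diffset :: "(int^'d) set \<Rightarrow> (int^'d) set" where
  "diffset A = {a - b | a b. a \<in> A \<and> b \<in> A}"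

definition int_span :: "(int^'d) set \<Rightarrow> (int^'d) set" where
  "int_span S = {(\<Sum>s\<in>S. c s *s s) | c. True}"

definition coneA :: "(int^'d) set \<Rightarrow> ((int^'d) \<times> int) set" where
  "coneA A = {(\<Sum>a\<in>A. int (n a) *s a, \<Sum>a\<in>A. int (n a)) | n. True}"

definition lattice_of :: "(nat \<Rightarrow> int^'d) \<Rightarrow> ((int^'d) \<times> int) set" where
  "lattice_of v = {(\<Sum>i\<in>{1..CARD('d)+1}. c i *s v i, \<Sum>i\<in>{1..CARD('d)+1}. c i) | c. True}"

definition S_pi :: "(int^'d) set \<Rightarrow> (nat \<Rightarrow> int^'d) \<Rightarrow> (int^'d) \<times> int \<Rightarrow> ((int^'d) \<times> int) set" where
  "S_pi A v \<pi> = {p \<in> coneA A. p - \<pi> \<in> lattice_of v}"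

definition minimal_elem :: "(int^'d) set \<Rightarrow> (nat \<Rightarrow> int^'d) \<Rightarrow> (int^'d) \<times> int \<Rightarrow> (int^'d) \<times> int \<Rightarrow> bool" where
  "minimal_elem A v \<pi> p \<longleftrightarrow> p \<in> S_pi A v \<pi> \<and>
     (\<forall>i\<in>{1..CARD('d)+1}. p - lift (v i) \<notin> coneA A)"

end

theory Submission
  imports Defs
begin



typedef ('a::finite) wo = "{..<CARD('a)}"
  morphisms wrep wabs
  by (rule exI[of _ 0]) simp

instantiation wo :: (finite) linorder
begin
definition less_eq_wo :: "'a wo \<Rightarrow> 'a wo \<Rightarrow> bool" where "less_eq_wo x y \<longleftrightarrow> wrep x \<le> wrep y"
definition less_wo :: "'a wo \<Rightarrow> 'a wo \<Rightarrow> bool" where "less_wo x y \<longleftrightarrow> wrep x < wrep y"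
instance by standard (auto simp: less_eq_wo_def less_wo_def wrep_inject)
end

instance wo :: (finite) finite
proof
  have "(UNIV :: 'a wo set) = wabs ` {..<CARD('a)}"
    by (metis type_definition.Abs_image type_definition_wo)
  then show "finite (UNIV :: 'a wo set)" by (metis finite_imageI finite_lessThan)
qed

instance wo :: (finite) wellorder
proof
  fix P :: "'a wo \<Rightarrow> bool" and a :: "'a wo"
  assume H: "\<And>x. (\<And>y. y < x \<Longrightarrow> P y) \<Longrightarrow> P x"
  have "\<forall>x. wrep x = n \<longrightarrow> P x" for n
  proof (induction n rule: less_induct)
    case (less n)
    show ?case using H less by (auto simp: less_wo_def)
  qed
  then show "P a" by blast
qed

lemma card_wo: "CARD('a::finite wo) = CARD('a)"
  by (metis card_lessThan type_definition.card type_definition_wo)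



lemma prod_Basis_cart: "(\<Prod>b\<in>Basis. (x::real^'n) \<bullet> b) = (\<Prod>i\<in>UNIV. x $ i)"
  by (simp add: Basis_vec_def UNION_singleton_eq_range prod.reindex axis_eq_axis inj_on_def cart_eq_inner_axis)

lemma perm_linear: "linear (\<lambda>x::real^'n::finite. (\<chi> j. x $ \<sigma> j) :: real^'m::finite)"
  by (auto simp: linear_iff vec_eq_iff)

lemma lborel_perm:
  fixes \<sigma> :: "'m::finite \<Rightarrow> 'n::finite"
  assumes bij: "bij \<sigma>"
  shows "distr lborel borel (\<lambda>x::real^'n. (\<chi> j. x $ \<sigma> j) :: real^'m) = lborel"
proof (rule lborel_eqI[symmetric])
  let ?P = "(\<lambda>x::real^'n. (\<chi> j. x $ \<sigma> j) :: real^'m)"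
  have meas[measurable]: "?P \<in> borel_measurable borel"
    by (intro borel_measurable_continuous_onI linear_continuous_on linear_conv_bounded_linear[THEN iffD1] perm_linear)
  fix l u :: "real^'m"
  assume le: "\<And>b. b \<in> Basis \<Longrightarrow> l \<bullet> b \<le> u \<bullet> b"
  then have le': "l $ i \<le> u $ i" for i
    using le[of "axis i 1"] by (simp add: cart_eq_inner_axis axis_in_Basis_iff)
  let ?l = "(\<chi> i. l $ inv \<sigma> i) :: real^'n" and ?u = "(\<chi> i. u $ inv \<sigma> i) :: real^'n"
  have pre: "?P -` box l u = box ?l ?u"
  proof -
    have "(\<forall>j. l $ j < x $ \<sigma> j \<and> x $ \<sigma> j < u $ j) \<longleftrightarrow> (\<forall>i. l $ inv \<sigma> i < x $ i \<and> x $ i < u $ inv \<sigma> i)" for x :: "real^'n"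
      using bij by (metis bij_inv_eq_iff)
    then show ?thesis by (auto simp: mem_box_cart)
  qed
  have "emeasure (distr lborel borel ?P) (box l u) = emeasure lborel (box ?l ?u)"
    by (subst emeasure_distr) (auto simp: pre)
  also have "\<dots> = ennreal (\<Prod>b\<in>Basis. (?u - ?l) \<bullet> b)"
  proof -
    have "\<forall>b\<in>Basis. ?l \<bullet> b \<le> ?u \<bullet> b"
      using le' by (auto simp: Basis_vec_def inner_axis)
    then show ?thesis by (simp add: emeasure_lborel_box_eq)
  qed
  also have "\<dots> = (\<Prod>i\<in>UNIV. ?u $ i - ?l $ i)"
    by (simp add: prod_Basis_cart)
  also have "\<dots> = (\<Prod>i\<in>UNIV. u $ inv \<sigma> i - l $ inv \<sigma> i)" by simp
  also have "\<dots> = (\<Prod>j\<in>UNIV. u $ j - l $ j)"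
    using prod.reindex_bij_betw[OF bij_betw_inv_into[OF bij], of "\<lambda>j. u $ j - l $ j"]
    by simp
  also have "\<dots> = (\<Prod>b\<in>Basis. (u - l) \<bullet> b)"
    by (simp add: prod_Basis_cart)
  finally show "emeasure (distr lborel borel ?P) (box l u) = (\<Prod>b\<in>Basis. (u - l) \<bullet> b)" .
qed simp


lemma measure_perm_image:
  fixes \<sigma> :: "'m::finite \<Rightarrow> 'n::finite" and S :: "(real^'n) set"
  assumes bij: "bij \<sigma>" and S: "S \<in> sets borel"
  shows "measure lebesgue ((\<lambda>x::real^'n. (\<chi> j. x $ \<sigma> j) :: real^'m) ` S) = measure lebesgue S"
proof -
  let ?P = "(\<lambda>x::real^'n. (\<chi> j. x $ \<sigma> j) :: real^'m)"
  let ?Q = "(\<lambda>y::real^'m. (\<chi> i. y $ inv \<sigma> i) :: real^'n)"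
  have QP: "?Q (?P x) = x" for x
    using bij by (simp add: vec_eq_iff surj_f_inv_f[OF bij_is_surj[OF bij]] inv_f_f[OF bij_is_inj[OF bij]])
  have PQ: "?P (?Q y) = y" for y
    using bij by (simp add: vec_eq_iff surj_f_inv_f[OF bij_is_surj[OF bij]] inv_f_f[OF bij_is_inj[OF bij]])
  have measP[measurable]: "?P \<in> borel_measurable borel"
    by (intro borel_measurable_continuous_onI linear_continuous_on linear_conv_bounded_linear[THEN iffD1] perm_linear)
  have measQ[measurable]: "?Q \<in> borel_measurable borel"
    by (intro borel_measurable_continuous_onI linear_continuous_on linear_conv_bounded_linear[THEN iffD1] perm_linear)
  have img: "?P ` S = ?Q -` S"
  proof
    show "?P ` S \<subseteq> ?Q -` S" using QP by auto
    show "?Q -` S \<subseteq> ?P ` S"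
    proof
      fix y assume "y \<in> ?Q -` S"
      then have "?Q y \<in> S" by simp
      then show "y \<in> ?P ` S" using PQ[of y] by (metis image_eqI)
    qed
  qed
  have PS: "?P ` S \<in> sets borel"
    unfolding img by (rule measurable_sets_borel[OF measQ S])
  have injP: "inj ?P"
    by (rule injI) (metis QP)
  have pre: "?P -` (?P ` S) = S"
    by (rule inj_vimage_image_eq[OF injP])
  have "measure lebesgue (?P ` S) = measure lborel (?P ` S)"
    using PS by simp
  also have "\<dots> = measure (distr lborel borel ?P) (?P ` S)"
    using lborel_perm[OF bij] by simp
  also have "\<dots> = measure lborel S"
    using PS by (simp add: measure_distr pre)
  also have "\<dots> = measure lebesgue S"
    using S by simp
  finally show ?thesis .
qed

lemma lin_scale:
  fixes f :: "real^'n::finite \<Rightarrow> real^'n"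
  assumes lin: "linear f"
  shows "\<exists>c. \<forall>S. compact S \<longrightarrow> measure lebesgue (f ` S) = c * measure lebesgue S"
proof -
  obtain \<sigma> :: "'n wo \<Rightarrow> 'n" where bij: "bij \<sigma>"
    using finite_same_card_bij[of "UNIV :: 'n wo set" "UNIV :: 'n set"] card_wo by auto
  let ?P = "(\<lambda>x::real^'n. (\<chi> j. x $ \<sigma> j) :: real^'n wo)"
  let ?Q = "(\<lambda>y::real^'n wo. (\<chi> i. y $ inv \<sigma> i) :: real^'n)"
  have QP: "?Q (?P x) = x" for x
    using bij by (simp add: vec_eq_iff surj_f_inv_f[OF bij_is_surj[OF bij]] inv_f_f[OF bij_is_inj[OF bij]])
  define g where "g = ?P \<circ> f \<circ> ?Q"
  have lg: "linear g"
    unfolding g_def by (intro linear_compose perm_linear lin)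
  have contP: "continuous_on UNIV ?P"
    by (intro linear_continuous_on linear_conv_bounded_linear[THEN iffD1] perm_linear)
  have contf: "continuous_on UNIV f"
    by (intro linear_continuous_on linear_conv_bounded_linear[THEN iffD1] lin)
  show ?thesis
  proof (intro exI allI impI)
    fix S :: "(real^'n) set" assume cS: "compact S"
    have cfS: "compact (f ` S)"
      using cS contf by (meson compact_continuous_image continuous_on_subset subset_UNIV)
    have cPS: "compact (?P ` S)"
      using cS contP by (meson compact_continuous_image continuous_on_subset subset_UNIV)
    have eq: "?P ` (f ` S) = g ` (?P ` S)"
      unfolding g_def image_comp[symmetric] using QP by (simp add: image_comp o_def)
    have "measure lebesgue (f ` S) = measure lebesgue (?P ` (f ` S))"
      using measure_perm_image[OF bij, of "f ` S"] cfS by (simp add: borel_compact)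
    also have "\<dots> = \<bar>det (matrix g)\<bar> * measure lebesgue (?P ` S)"
      unfolding eq by (rule measure_linear_image[OF lg lmeasurable_compact[OF cPS]])
    also have "measure lebesgue (?P ` S) = measure lebesgue S"
      using measure_perm_image[OF bij, of S] cS by (simp add: borel_compact)
    finally show "measure lebesgue (f ` S) = \<bar>det (matrix g)\<bar> * measure lebesgue S" .
  qed
qed




lemma rvec_nth[simp]: "rvec x $ i = of_int (x $ i)" by (simp add: rvec_def)

lemma sum_Basis_cart: "(\<Sum>b\<in>Basis. (x::real^'n) \<bullet> b) = (\<Sum>i\<in>UNIV. x $ i)"
  by (simp add: Basis_vec_def UNION_singleton_eq_range sum.reindex axis_eq_axis inj_on_def cart_eq_inner_axis)



lemma rvec_diff: "rvec (a - b) = rvec a - rvec b" by (simp add: vec_eq_iff)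
lemma rvec_add: "rvec (a + b) = rvec a + rvec b" by (simp add: vec_eq_iff)
lemma rvec_uminus: "rvec (- a) = - rvec a" by (simp add: vec_eq_iff)
lemma rvec_zero[simp]: "rvec 0 = 0" by (simp add: vec_eq_iff)
lemma rvec_eq_iff: "rvec a = rvec b \<longleftrightarrow> a = b" by (simp add: vec_eq_iff)

lemma countable_int_vec: "countable (UNIV :: (int^'n::finite) set)"
  by (rule countableI_type)

lemma int_between: fixes a b :: int and x :: real
  assumes "of_int a < x + 1" "x < of_int a + 1" "x = of_int b"
  shows "a = b"
proof -
  have "of_int a < of_int b + (1::real)" "of_int b < of_int a + (1::real)" using assms by auto
  then have "a < b + 1" "b < a + 1" by linarith+
  then show ?thesis by linarith
qed

lemma blichfeldt:
  fixes f :: "real^'n::finite \<Rightarrow> real^'n" and R :: "(int^'n) set"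
  assumes lin: "linear f" and inj: "inj f"
    and intg: "\<And>\<kappa>. \<exists>\<mu>. f (rvec \<kappa>) = rvec \<mu>"
    and fin: "finite R"
    and incong: "\<And>r r' \<kappa>. r \<in> R \<Longrightarrow> r' \<in> R \<Longrightarrow> rvec r - rvec r' = f (rvec \<kappa>) \<Longrightarrow> r = r'"
  shows "real (card R) \<le> measure lebesgue (f ` cbox 0 1)"
proof -
  have surj: "surj f" by (rule linear_injective_imp_surjective[OF lin inj]) simp
  define g where "g = inv f"
  have lg: "linear g" using inj_linear_imp_inv_linear[OF lin inj] g_def by simp
  have gf: "g (f x) = x" for x by (simp add: g_def inv_f_f[OF inj])
  have fg: "f (g y) = y" for y by (simp add: g_def surj_f_inv_f[OF surj])
  have gmeas[measurable]: "g \<in> borel_measurable borel"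
    by (intro borel_measurable_continuous_onI linear_continuous_on linear_conv_bounded_linear[THEN iffD1] lg)
  have cg: "continuous_on UNIV g"
    by (intro linear_continuous_on linear_conv_bounded_linear[THEN iffD1] lg)
  have gimeas[measurable]: "(\<lambda>y. g y $ i) \<in> borel_measurable borel" for i
    by (intro borel_measurable_continuous_onI continuous_on_component cg)
  define kk where "kk y = (\<chi> i. \<lfloor>g y $ i\<rfloor> :: int^'n)" for y
  define Cell where "Cell \<kappa> = {y. \<forall>i. of_int (\<kappa>$i) \<le> g y $ i \<and> g y $ i < of_int (\<kappa>$i) + 1}" for \<kappa> :: "int^'n"
  have Cell_iff: "y \<in> Cell \<kappa> \<longleftrightarrow> kk y = \<kappa>" for y \<kappa>
    by (simp add: Cell_def kk_def vec_eq_iff floor_eq_iff)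
  have Cell_meas: "Cell \<kappa> \<in> sets borel" for \<kappa>
    unfolding Cell_def by measurable
  define ones :: "real^'n" where "ones = (\<chi> i. 1)"
  define Bx where "Bx r = box (rvec r) (rvec r + ones)" for r :: "int^'n"
  have Bx_iff: "y \<in> Bx r \<longleftrightarrow> (\<forall>i. of_int (r$i) < y$i \<and> y$i < of_int (r$i) + 1)" for y r
    by (simp add: Bx_def mem_box_cart ones_def)
  have Bx_meas: "Bx r \<in> sets borel" for r by (simp add: Bx_def)
  have Bx_emeas: "emeasure lebesgue (Bx r) = 1" for r
  proof -
    have "\<forall>b\<in>Basis. rvec r \<bullet> b \<le> (rvec r + ones) \<bullet> b"
      by (auto simp: Basis_vec_def inner_axis ones_def)
    then have "emeasure lborel (Bx r) = ennreal (\<Prod>b\<in>Basis. (rvec r + ones - rvec r) \<bullet> b)"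
      by (simp add: Bx_def emeasure_lborel_box_eq)
    also have "\<dots> = 1" by (simp add: prod_Basis_cart ones_def)
    finally show ?thesis using Bx_meas by simp
  qed
  define E where "E r \<kappa> = (\<lambda>y. y - f (rvec \<kappa>)) ` (Bx r \<inter> Cell \<kappa>)" for r \<kappa>
  have E_aff: "E r \<kappa> = (\<lambda>x. 1 *\<^sub>R x + (- f (rvec \<kappa>))) ` (Bx r \<inter> Cell \<kappa>)" for r \<kappa>
    by (simp add: E_def)
  have E_emeas: "emeasure lebesgue (E r \<kappa>) = emeasure lebesgue (Bx r \<inter> Cell \<kappa>)" for r \<kappa>
    unfolding E_aff using emeasure_lebesgue_affine[of 1 "- f (rvec \<kappa>)" "Bx r \<inter> Cell \<kappa>"] by simp
  have BC_meas: "Bx r \<inter> Cell \<kappa> \<in> sets lebesgue" for r \<kappa>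
    using Bx_meas Cell_meas by simp
  have E_meas: "E r \<kappa> \<in> sets lebesgue" for r \<kappa>
  proof -
    have "E r \<kappa> = (\<lambda>x. (- f (rvec \<kappa>)) + x) ` (Bx r \<inter> Cell \<kappa>)" by (simp add: E_def)
    then show ?thesis using lebesgue_sets_translation[OF BC_meas] by metis
  qed
  have disj: "r = r' \<and> \<kappa> = \<kappa>'" if rR: "r \<in> R" "r' \<in> R" and zE: "z \<in> E r \<kappa>" "z \<in> E r' \<kappa>'" for r r' \<kappa> \<kappa>' z
  proof -
    obtain y where y: "y \<in> Bx r" "z = y - f (rvec \<kappa>)" using zE(1) by (auto simp: E_def)
    obtain y' where y': "y' \<in> Bx r'" "z = y' - f (rvec \<kappa>')" using zE(2) by (auto simp: E_def)
    obtain \<mu> where \<mu>: "f (rvec (\<kappa> - \<kappa>')) = rvec \<mu>" using intg by blast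
    have yy: "y - y' = rvec \<mu>"
      using y y' \<mu> by (simp add: rvec_diff linear_diff[OF lin] algebra_simps)
    have "\<mu> $ i = r $ i - r' $ i" for i
    proof -
      have "y $ i - y' $ i = of_int (\<mu> $ i)" using yy by (simp add: vec_eq_iff)
      moreover have "of_int (r$i) < y$i" "y$i < of_int (r$i) + 1" "of_int (r'$i) < y'$i" "y'$i < of_int (r'$i) + 1"
        using y(1) y'(1) by (auto simp: Bx_iff)
      ultimately show ?thesis
        using int_between[of "r$i - r'$i" "y $ i - y' $ i" "\<mu> $ i"] by simp
    qed
    then have "\<mu> = r - r'" by (simp add: vec_eq_iff)
    then have rr: "rvec r - rvec r' = f (rvec (\<kappa> - \<kappa>'))" using \<mu> by (simp add: rvec_diff)
    then have "r = r'" using incong rR by blast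
    then have "f (rvec (\<kappa> - \<kappa>')) = f 0" using rr linear_0[OF lin] by simp
    then have "rvec (\<kappa> - \<kappa>') = 0" using inj by (meson injD)
    then have "\<kappa> = \<kappa>'" by (simp add: rvec_diff rvec_eq_iff[symmetric])
    with \<open>r = r'\<close> show ?thesis by simp
  qed
  have cnt: "countable (UNIV :: (int^'n) set)" by (rule countable_int_vec)
  have Bx_UN: "Bx r = (\<Union>\<kappa>. Bx r \<inter> Cell \<kappa>)" for r
    using Cell_iff by blast
  have row: "emeasure lebesgue (\<Union>\<kappa>. E r \<kappa>) = 1" if "r \<in> R" for r
  proof -
    have "emeasure lebesgue (\<Union>\<kappa>. E r \<kappa>) = (\<integral>\<^sup>+\<kappa>. emeasure lebesgue (E r \<kappa>) \<partial>count_space UNIV)"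
      using E_meas cnt disj[OF that that]
      by (subst emeasure_UN_countable) (auto simp: disjoint_family_on_def)
    also have "\<dots> = (\<integral>\<^sup>+\<kappa>. emeasure lebesgue (Bx r \<inter> Cell \<kappa>) \<partial>count_space UNIV)"
      by (simp add: E_emeas)
    also have "\<dots> = emeasure lebesgue (\<Union>\<kappa>. Bx r \<inter> Cell \<kappa>)"
      using BC_meas cnt Cell_iff
      by (subst emeasure_UN_countable) (auto simp: disjoint_family_on_def)
    also have "\<dots> = 1" using Bx_UN Bx_emeas by simp
    finally show ?thesis .
  qed
  define Big where "Big = (\<Union>r\<in>R. \<Union>\<kappa>. E r \<kappa>)"
  have "emeasure lebesgue Big = (\<integral>\<^sup>+r. emeasure lebesgue (\<Union>\<kappa>. E r \<kappa>) \<partial>count_space R)"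
    unfolding Big_def using E_meas fin disj
    by (subst emeasure_UN_countable) (auto simp: disjoint_family_on_def countable_finite)
  also have "\<dots> = (\<Sum>r\<in>R. emeasure lebesgue (\<Union>\<kappa>. E r \<kappa>))"
    using fin by (simp add: nn_integral_count_space_finite)
  also have "\<dots> = of_nat (card R)" using row by simp
  finally have Bigm: "emeasure lebesgue Big = of_nat (card R)" .
  have sub: "Big \<subseteq> f ` cbox 0 1"
  proof
    fix z assume "z \<in> Big"
    then obtain r :: "int^'n" and \<kappa> y where y: "y \<in> Cell \<kappa>" "z = y - f (rvec \<kappa>)"
      by (auto simp: Big_def E_def)
    have "g y - rvec \<kappa> \<in> cbox 0 1"
      using y(1) unfolding Cell_def mem_box_cart by (auto simp: less_imp_le) (smt (verit))
    moreover have "f (g y - rvec \<kappa>) = z"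
      using y(2) by (simp add: linear_diff[OF lin] fg)
    ultimately show "z \<in> f ` cbox 0 1" by (metis image_eqI)
  qed
  have cf: "compact (f ` cbox 0 1)"
    by (intro compact_continuous_image linear_continuous_on linear_conv_bounded_linear[THEN iffD1] lin compact_cbox)
  have fm: "f ` cbox 0 1 \<in> fmeasurable lebesgue"
    using lmeasurable_compact[OF cf] .
  have "of_nat (card R) \<le> emeasure lebesgue (f ` cbox 0 1)"
    unfolding Bigm[symmetric] using sub fm by (intro emeasure_mono) (auto simp: fmeasurable_def)
  also have "\<dots> = ennreal (measure lebesgue (f ` cbox 0 1))"
    using fm by (simp add: emeasure_eq_measure2)
  finally show ?thesis
    by (simp add: ennreal_of_nat_eq_real_of_nat ennreal_le_iff)
qed


context
  fixes v :: "nat \<Rightarrow> int^'d::finite" and e :: "'d \<Rightarrow> nat" and f :: "real^'d \<Rightarrow> real^'d"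
  assumes e: "bij_betw e UNIV {1..CARD('d)}"
   and vinj: "inj_on v {1..CARD('d)+1}"
   and aff: "\<not> affine_dependent (rvec ` v ` {1..CARD('d)+1})"
   and f_def: "f = (\<lambda>t. \<Sum>j\<in>UNIV. t$j *\<^sub>R (rvec (v (e j)) - rvec (v (CARD('d)+1))))"
begin

lemma ff_linear: "linear f"
  unfolding f_def
  by (auto simp: linear_iff scaleR_add_left sum.distrib scaleR_sum_right)

lemma ff_intg: "f (rvec \<kappa>) = rvec (\<Sum>j\<in>UNIV. \<kappa>$j *s (v (e j) - v (CARD('d)+1)))"
  unfolding f_def by (simp add: vec_eq_iff sum_component algebra_simps)

lemma ff_axis: "f (axis j 1) = rvec (v (e j)) - rvec (v (CARD('d)+1))"
proof -
  have "f (axis j 1) = (\<Sum>ja\<in>UNIV. (if ja = j then rvec (v (e ja)) - rvec (v (CARD('d)+1)) else 0))"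
    unfolding f_def by (rule sum.cong) (auto simp: axis_def)
  then show ?thesis by simp
qed

lemma e_in: "e j \<in> {1..CARD('d)}" using e by (auto simp: bij_betw_def)
lemma e_inj: "inj e" using e by (auto simp: bij_betw_def)

lemma img_e: "h ` {1..CARD('d)} = range (\<lambda>j. h (e j))"
proof -
  have "{1..CARD('d)} = range e" using e by (simp add: bij_betw_def)
  then show ?thesis by auto
qed

lemma rvec_inj: "inj rvec" by (auto simp: inj_on_def vec_eq_iff)

lemma p_inj: "inj_on (\<lambda>i. rvec (v i)) {1..CARD('d)+1}"
  using vinj rvec_inj by (auto simp: inj_on_def)

lemma ff_inj: "inj f"
proof -
  let ?N = "CARD('d)+1"
  let ?p = "\<lambda>i. rvec (v i)"
  let ?w = "\<lambda>j. ?p (e j) - ?p ?N"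
  have pN: "?p ?N \<notin> ?p ` {1..CARD('d)}"
  proof
    assume "?p ?N \<in> ?p ` {1..CARD('d)}"
    then obtain x where x: "x \<in> {1..CARD('d)}" "?p ?N = ?p x" by auto
    then have "?N = x" using inj_onD[OF p_inj x(2)] by simp
    then show False using x by simp
  qed
  have ins: "rvec ` v ` {1..CARD('d)+1} = insert (?p ?N) (?p ` {1..CARD('d)})"
    proof -
    have "{1..CARD('d)+1} = insert (CARD('d)+1) {1..CARD('d)}" by auto
    then show ?thesis by (simp add: image_image)
  qed
  have "\<not> dependent ((\<lambda>x. - ?p ?N + x) ` (?p ` {1..CARD('d)}))"
    using aff affine_dependent_iff_dependent[OF pN] ins by simp
  moreover have imgw: "(\<lambda>x. - ?p ?N + x) ` (?p ` {1..CARD('d)}) = range ?w"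
    unfolding img_e[of ?p] image_image by (simp add: algebra_simps)
  ultimately have indep: "\<not> dependent (range ?w)" by simp
  have winj: "inj ?w"
  proof (rule injI)
    fix a b assume "?w a = ?w b"
    then have "?p (e a) = ?p (e b)" by simp
    then have "e a = e b" using p_inj e_in[of a] e_in[of b] by (auto simp: inj_on_def)
    then show "a = b" using e_inj by (simp add: inj_eq)
  qed
  define w where "w = ?w"
  have winj': "inj w" using winj by (simp add: w_def)
  have iw: "inv w (w j) = j" for j by (rule inv_f_f[OF winj'])
  have fw: "f t = (\<Sum>j\<in>UNIV. t $ j *\<^sub>R w j)" for t by (simp add: f_def w_def)
  have indep': "\<not> dependent (range w)" using indep by (simp add: w_def)
  have "t = 0" if "f t = 0" for t
  proof (rule ccontr)
    assume "t \<noteq> 0"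
    then obtain j where j: "t $ j \<noteq> 0" by (auto simp: vec_eq_iff)
    define u where "u x = t $ (inv w x)" for x
    have "(\<Sum>x\<in>range w. u x *\<^sub>R x) = (\<Sum>j\<in>UNIV. u (w j) *\<^sub>R w j)"
      using winj' by (simp add: sum.reindex)
    also have "\<dots> = f t" unfolding fw u_def iw ..
    finally have "(\<Sum>x\<in>range w. u x *\<^sub>R x) = 0" using that by simp
    moreover have "u (w j) \<noteq> 0" using j by (simp add: u_def iw)
    ultimately have "dependent (range w)"
      by (subst dependent_finite) auto
    with indep' show False by simp
  qed
  then show ?thesis using ff_linear by (simp add: linear_injective_0)
qed

lemma hull_eq:
  "convex hull (rvec ` v ` {1..CARD('d)+1}) =
     (\<lambda>x. rvec (v (CARD('d)+1)) + x) ` (f ` (convex hull (insert 0 Basis)))"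
proof -
  let ?N = "CARD('d)+1"
  let ?p = "\<lambda>i. rvec (v i)"
  have B: "(Basis :: (real^'d) set) = range (\<lambda>j. axis j 1)" by (auto simp: Basis_vec_def)
  have "f ` Basis = (\<lambda>j. ?p (e j) - ?p ?N) ` UNIV"
    by (simp add: B image_image ff_axis)
  also have "\<dots> = (\<lambda>x. x - ?p ?N) ` (?p ` {1..CARD('d)})"
    unfolding img_e[of ?p] image_image by simp
  finally have fB: "f ` Basis = (\<lambda>x. x - ?p ?N) ` (?p ` {1..CARD('d)})" .
  have "(\<lambda>x. ?p ?N + x) ` (f ` (convex hull (insert 0 Basis)))
      = (\<lambda>x. ?p ?N + x) ` (convex hull (f ` insert 0 Basis))"
    by (simp add: convex_hull_linear_image[OF ff_linear])
  also have "\<dots> = convex hull ((\<lambda>x. ?p ?N + x) ` (f ` insert 0 Basis))"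
    by (rule convex_hull_translation[symmetric])
  also have "(\<lambda>x. ?p ?N + x) ` (f ` insert 0 Basis) = insert (?p ?N) (?p ` {1..CARD('d)})"
    using fB linear_0[OF ff_linear] by (auto simp: image_image)
  also have "\<dots> = rvec ` v ` {1..CARD('d)+1}"
    proof -
    have "{1..CARD('d)+1} = insert (CARD('d)+1) {1..CARD('d)}" by auto
    then show ?thesis by (simp add: image_image)
  qed
  finally show ?thesis by simp
qed

lemma hull_coords:
  assumes "x \<in> convex hull (rvec ` v ` {1..CARD('d)+1})"
  shows "\<exists>t. (\<forall>j. 0 \<le> t$j) \<and> (\<Sum>j\<in>UNIV. t$j) \<le> 1 \<and> x = rvec (v (CARD('d)+1)) + f t"
proof -
  obtain t where t: "t \<in> convex hull (insert 0 Basis)" "x = rvec (v (CARD('d)+1)) + f t"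
    using assms hull_eq by auto
  then have "(\<forall>i\<in>Basis. 0 \<le> t \<bullet> i) \<and> (\<Sum>i\<in>Basis. t \<bullet> i) \<le> 1"
    by (simp add: std_simplex)
  then have "(\<forall>j. 0 \<le> t$j) \<and> (\<Sum>j\<in>UNIV. t$j) \<le> 1"
  proof -
    have ax: "axis j 1 \<in> (Basis :: (real^'d) set)" for j by (auto simp: Basis_vec_def)
    assume "(\<forall>i\<in>Basis. 0 \<le> t \<bullet> i) \<and> (\<Sum>i\<in>Basis. t \<bullet> i) \<le> 1"
    then show ?thesis unfolding sum_Basis_cart using ax by (auto simp: cart_eq_inner_axis)
  qed
  with t show ?thesis by blast
qed

lemma measure_ff:
  "measure lebesgue (f ` cbox 0 1) = fact CARD('d) * measure lebesgue (convex hull (rvec ` v ` {1..CARD('d)+1}))"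
proof -
  obtain c where c: "\<And>S. compact S \<Longrightarrow> measure lebesgue (f ` S) = c * measure lebesgue S"
    using lin_scale[OF ff_linear] by blast
  have m1: "measure lebesgue (cbox 0 (1::real^'d)) = 1"
  proof -
    have "measure lborel (cbox 0 (1::real^'d)) = (\<Prod>b\<in>Basis. (1 - 0::real^'d) \<bullet> b)"
      by (rule measure_lborel_cbox) (auto simp: Basis_vec_def inner_axis)
    also have "\<dots> = 1" by (simp add: prod_Basis_cart)
    finally show ?thesis by simp
  qed
  have cS: "compact (convex hull (insert 0 (Basis :: (real^'d) set)))"
    by (intro finite_imp_compact_convex_hull) auto
  have mS: "measure lebesgue (convex hull (insert 0 (Basis :: (real^'d) set))) = 1 / fact CARD('d)"
    using content_std_simplex[where 'a="real^'d"] cS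
    by (simp add: borel_compact)
  have "measure lebesgue (convex hull (rvec ` v ` {1..CARD('d)+1})) = measure lebesgue (f ` (convex hull (insert 0 Basis)))"
    unfolding hull_eq by (rule measure_translation)
  also have "\<dots> = c / fact CARD('d)" using c[OF cS] mS by simp
  finally have "measure lebesgue (convex hull (rvec ` v ` {1..CARD('d)+1})) = c / fact CARD('d)" .
  moreover have "measure lebesgue (f ` cbox 0 1) = c" using c[of "cbox 0 1"] m1 by simp
  ultimately show ?thesis by simp
qed

end




lemma cone_mem: "(\<Sum>a\<in>A. int (n a) *s a, \<Sum>a\<in>A. int (n a)) \<in> coneA A"
  unfolding coneA_def by blast

lemma cone_add:
  assumes "x \<in> coneA A" "y \<in> coneA A" shows "x + y \<in> coneA A"
proof -
  obtain n1 where n1: "x = (\<Sum>a\<in>A. int (n1 a) *s a, \<Sum>a\<in>A. int (n1 a))" using assms(1) by (auto simp: coneA_def)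
  obtain n2 where n2: "y = (\<Sum>a\<in>A. int (n2 a) *s a, \<Sum>a\<in>A. int (n2 a))" using assms(2) by (auto simp: coneA_def)
  have eq: "x + y = (\<Sum>a\<in>A. int (n1 a + n2 a) *s a, \<Sum>a\<in>A. int (n1 a + n2 a))"
    by (simp add: n1 n2 sum.distrib vector_sadd_rdistrib)
  show ?thesis unfolding eq by (rule cone_mem)
qed

lemma cone_zero: "0 \<in> coneA A"
  using cone_mem[of "\<lambda>_. 0" A] by (simp add: zero_prod_def)

lemma cone_sum:
  assumes "finite I" "\<And>i. i \<in> I \<Longrightarrow> g i \<in> coneA A" shows "sum g I \<in> coneA A"
  using assms by (induction I rule: finite_induct) (auto intro: cone_add cone_zero)

lemma cone_gen:
  assumes "finite A" "a \<in> A" "c \<ge> 0" shows "(c *s a, c) \<in> coneA A"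
proof -
  define n where "n b = (if b = a then nat c else 0)" for b
  have "(\<Sum>b\<in>A. int (n b) *s b) = (\<Sum>b\<in>A. (if b = a then c *s a else 0))"
    by (rule sum.cong) (auto simp: n_def assms(3))
  also have "\<dots> = c *s a" using assms by simp
  finally have 1: "(\<Sum>b\<in>A. int (n b) *s b) = c *s a" .
  have "(\<Sum>b\<in>A. int (n b)) = (\<Sum>b\<in>A. (if b = a then c else 0))"
    by (rule sum.cong) (auto simp: n_def assms(3))
  also have "\<dots> = c" using assms by simp
  finally have 2: "(\<Sum>b\<in>A. int (n b)) = c" .
  show ?thesis using cone_mem[of n A] 1 2 by simp
qed

lemma cone_combo:
  assumes "finite A" "finite I" "\<And>i. i \<in> I \<Longrightarrow> w i \<in> A" "\<And>i. i \<in> I \<Longrightarrow> c i \<ge> 0"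
  shows "(\<Sum>i\<in>I. c i *s w i, \<Sum>i\<in>I. c i) \<in> coneA A"
proof -
  have "(\<Sum>i\<in>I. c i *s w i, \<Sum>i\<in>I. c i) = (\<Sum>i\<in>I. (c i *s w i, c i))"
    by (simp add: prod_eq_iff fst_sum snd_sum)
  also have "\<dots> \<in> coneA A"
    using assms by (intro cone_sum cone_gen) auto
  finally show ?thesis .
qed

lemma chain_exists:
  fixes n :: "'a \<Rightarrow> nat"
  assumes "finite A" "sum n A = h"
  shows "\<exists>ch. (\<forall>k\<le>h. sum (ch k) A = k) \<and> (\<forall>j k a. j \<le> k \<longrightarrow> k \<le> h \<longrightarrow> ch j a \<le> ch k a) \<and> (\<forall>a. ch h a = n a)"
  using assms(2)
proof (induction h arbitrary: n)
  case 0
  show ?case by (rule exI[of _ "\<lambda>_. n"]) (use 0 in auto)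
next
  case (Suc h)
  have "\<exists>a\<in>A. n a > 0"
  proof (rule ccontr)
    assume "\<not> ?thesis" then have "sum n A = 0" by simp
    with Suc.prems show False by simp
  qed
  then obtain a where a: "a \<in> A" "n a > 0" by blast
  define n' where "n' = n(a := n a - 1)"
  have "sum n A = n a + sum n (A - {a})" using a assms(1) by (simp add: sum.remove)
  moreover have "sum n' A = n' a + sum n' (A - {a})" using a assms(1) by (simp add: sum.remove)
  moreover have "sum n' (A - {a}) = sum n (A - {a})" by (rule sum.cong) (auto simp: n'_def)
  ultimately have "sum n' A = h" using Suc.prems a by (simp add: n'_def)
  from Suc.IH[OF this] obtain ch where ch: "\<forall>k\<le>h. sum (ch k) A = k"
    "\<forall>j k a. j \<le> k \<longrightarrow> k \<le> h \<longrightarrow> ch j a \<le> ch k a" "\<forall>a. ch h a = n' a" by blast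
  have n'n: "n' b \<le> n b" for b by (simp add: n'_def)
  show ?case
  proof (rule exI[of _ "ch(Suc h := n)"], intro conjI allI impI)
    fix k assume "k \<le> Suc h" then show "sum ((ch(Suc h := n)) k) A = k"
      using ch(1) Suc.prems by (cases "k = Suc h") auto
  next
    fix j k b assume jk: "j \<le> k" "k \<le> Suc h"
    show "(ch(Suc h := n)) j b \<le> (ch(Suc h := n)) k b"
    proof (cases "k = Suc h")
      case True
      then show ?thesis
      proof (cases "j = Suc h")
        case False
        then have "ch j b \<le> ch h b" using ch(2) jk True by simp
        also have "\<dots> \<le> n b" using ch(3) n'n by simp
        finally show ?thesis using True False by simp
      qed simp
    next
      case False
      then show ?thesis using jk ch(2) by simp
    qed
  qed simp
qed


theorem lemma3p1:
  fixes A :: "(int^'d) set" and v :: "nat \<Rightarrow> int^'d" and \<pi> :: "(int^'d) \<times> int"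
  assumes "finite A"
    and "int_span (diffset A) = UNIV"
    and "inj_on v {1..CARD('d)+1}"
    and "\<not> affine_dependent (rvec ` v ` {1..CARD('d)+1})"
    and "convex hull (rvec ` A) = convex hull (rvec ` v ` {1..CARD('d)+1})"
  shows "(\<forall>\<alpha> M. minimal_elem A v \<pi> (\<alpha>, M) \<longrightarrow>
            real_of_int M \<le> measure lebesgue (convex hull (rvec ` A)) * fact CARD('d) - 1)
         \<and> finite {p. minimal_elem A v \<pi> p}"
proof -
  let ?N = "CARD('d)+1"
  let ?I = "{1..CARD('d)+1}"
  obtain e :: "'d \<Rightarrow> nat" where e: "bij_betw e UNIV {1..CARD('d)}"
    using finite_same_card_bij[of "UNIV :: 'd set" "{1..CARD('d)}"] by auto
  define f where "f = (\<lambda>t::real^'d. \<Sum>j\<in>UNIV. t$j *\<^sub>R (rvec (v (e j)) - rvec (v (CARD('d)+1))))"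
  note ctx = e assms(3) assms(4) f_def
  have lin: "linear f" by (rule ff_linear[OF ctx])
  have finj: "inj f" by (rule ff_inj[OF ctx])
  have intg: "f (rvec \<kappa>) = rvec (\<Sum>j\<in>UNIV. \<kappa>$j *s (v (e j) - v (CARD('d)+1)))" for \<kappa>
    by (rule ff_intg[OF ctx])
  have eI: "e j \<in> {1..CARD('d)}" for j by (rule e_in[OF ctx])
  have einj: "inj e" by (rule e_inj[OF ctx])
  have rinj: "inj rvec" by (auto simp: inj_on_def vec_eq_iff)
  define D where "D = measure lebesgue (convex hull (rvec ` A)) * fact CARD('d)"
  have measD: "measure lebesgue (f ` cbox 0 1) = D"
    using measure_ff[OF ctx] assms(5) by (simp add: D_def)
  have vA: "v i \<in> A" if "i \<in> ?I" for i
  proof -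
    have "rvec (v i) extreme_point_of (convex hull (rvec ` v ` ?I))"
      using extreme_point_of_convex_hull_affine_independent[OF assms(4)] that by auto
    then have "rvec (v i) \<in> rvec ` A" using assms(5) extreme_point_of_convex_hull by metis
    then show ?thesis using rinj by (auto simp: inj_on_def)
  qed
  have Acoord: "\<exists>t. (\<forall>j. 0 \<le> t$j) \<and> (\<Sum>j\<in>UNIV. t$j) \<le> 1 \<and> rvec a = rvec (v ?N) + f t" if "a \<in> A" for a
  proof -
    have "rvec a \<in> convex hull (rvec ` A)" by (rule hull_inc) (simp add: that)
    then show ?thesis using hull_coords[OF ctx] assms(5) by simp
  qed
  obtain t where t: "\<And>a. a \<in> A \<Longrightarrow> (\<forall>j. 0 \<le> t a $ j) \<and> (\<Sum>j\<in>UNIV. t a $ j) \<le> 1 \<and> rvec a = rvec (v ?N) + f (t a)"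
    using Acoord by metis
  have t_nn: "\<And>a j. a \<in> A \<Longrightarrow> 0 \<le> t a $ j" using t by blast
  have t_sum: "\<And>a. a \<in> A \<Longrightarrow> (\<Sum>j\<in>UNIV. t a $ j) \<le> 1" using t by blast
  have t_eq: "\<And>a. a \<in> A \<Longrightarrow> rvec a = rvec (v ?N) + f (t a)" using t by blast
  have bound: "real_of_int M \<le> D - 1" if min: "minimal_elem A v \<pi> (\<alpha>, M)" for \<alpha> M
  proof -
    have pc: "(\<alpha>, M) \<in> coneA A" and nomin: "\<And>i. i \<in> ?I \<Longrightarrow> (\<alpha>, M) - lift (v i) \<notin> coneA A"
      using min by (auto simp: minimal_elem_def S_pi_def)
    obtain n0 where n0: "\<alpha> = (\<Sum>a\<in>A. int (n0 a) *s a)" "M = (\<Sum>a\<in>A. int (n0 a))"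
      using pc by (auto simp: coneA_def)
    define h where "h = sum n0 A"
    have Mh: "M = int h" using n0(2) by (simp add: h_def)
    obtain ch where ch1: "\<And>k. k \<le> h \<Longrightarrow> sum (ch k) A = k"
      and ch2: "\<And>j k a. j \<le> k \<Longrightarrow> k \<le> h \<Longrightarrow> ch j a \<le> ch k a" and ch3: "\<And>a. ch h a = n0 a"
      using chain_exists[OF assms(1) h_def[symmetric]] by blast
    define P where "P k = (\<Sum>a\<in>A. int (ch k a) *s a)" for k
    define y where "y k = P k - int k *s v ?N" for k
    show ?thesis
    proof (rule ccontr)
      assume "\<not> real_of_int M \<le> D - 1"
      then have big: "D < real (card {0..h})" using Mh by simp
      have "\<exists>j k \<kappa>. j < k \<and> k \<le> h \<and> rvec (y k) - rvec (y j) = f (rvec \<kappa>)"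
      proof (rule ccontr)
        assume nc: "\<not> ?thesis"
        have nc': False if "j < k" "k \<le> h" "rvec (y k) - rvec (y j) = f (rvec \<kappa>)" for j k \<kappa>
          using nc that by blast
        have sym: "j = k" if jh: "j \<le> h" "k \<le> h" and eq: "rvec (y j) - rvec (y k) = f (rvec \<kappa>)" for j k \<kappa>
        proof (rule ccontr)
          assume "j \<noteq> k"
          then consider "j < k" | "k < j" by linarith
          then show False
          proof cases
            case 1
            have "rvec (y k) - rvec (y j) = - (rvec (y j) - rvec (y k))" by simp
            also have "\<dots> = f (rvec (- \<kappa>))" using eq by (simp add: rvec_uminus linear_neg[OF lin])
            finally show False using nc' 1 jh by blast
          next
            case 2 then show False using nc' jh eq by blast
          qed
        qed
        have injy: "inj_on y {0..h}"
        proof (rule inj_onI)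
          fix j k assume "j \<in> {0..h}" "k \<in> {0..h}" "y j = y k"
          then show "j = k" using sym[of j k 0] linear_0[OF lin] by simp
        qed
        have "real (card (y ` {0..h})) \<le> measure lebesgue (f ` cbox 0 1)"
        proof (rule blichfeldt[OF lin finj])
          show "\<And>\<kappa>. \<exists>\<mu>. f (rvec \<kappa>) = rvec \<mu>" using intg by blast
          show "finite (y ` {0..h})" by simp
          fix r r' \<kappa> assume rr: "r \<in> y ` {0..h}" "r' \<in> y ` {0..h}" "rvec r - rvec r' = f (rvec \<kappa>)"
          then obtain j1 k1 where jk1: "j1 \<le> h" "k1 \<le> h" "r = y j1" "r' = y k1" by auto
          then have "j1 = k1" using sym[of j1 k1 \<kappa>] rr(3) by simp
          then show "r = r'" using jk1 by simp
        qed
        then have "real (card {0..h}) \<le> D" using card_image[OF injy] measD by simp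
        with big show False by simp
      qed
      then obtain j k \<kappa> where jk: "j < k" "k \<le> h" and \<kappa>: "rvec (y k) - rvec (y j) = f (rvec \<kappa>)"
        by blast
      define m where "m a = ch k a - ch j a" for a
      have chjk: "ch j a \<le> ch k a" for a using ch2 jk by simp
      have m_int: "int (m a) = int (ch k a) - int (ch j a)" for a
        using chjk[of a] by (simp add: m_def of_nat_diff)
      have sumk: "(\<Sum>a\<in>A. int (ch k a)) = int k" using ch1[of k] jk by (simp flip: of_nat_sum)
      have sumj: "(\<Sum>a\<in>A. int (ch j a)) = int j" using ch1[of j] jk by (simp flip: of_nat_sum)
      have summ: "(\<Sum>a\<in>A. int (m a)) = int k - int j"
        using sumk sumj by (simp add: m_int sum_subtractf)
      have PkPj: "P k - P j = (\<Sum>a\<in>A. int (m a) *s a)"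
        by (simp add: P_def m_int vector_sub_rdistrib sum_subtractf)
      have ydiff: "y k - y j = (\<Sum>a\<in>A. int (m a) *s (a - v ?N))"
      proof -
        have "y k - y j = (P k - P j) - (int k - int j) *s v ?N"
          by (simp add: y_def vector_sub_rdistrib algebra_simps)
        also have "(int k - int j) *s v ?N = (\<Sum>a\<in>A. int (m a) *s v ?N)"
          unfolding summ[symmetric] by (simp add: vec_eq_iff sum_component sum_distrib_right)
        finally show ?thesis unfolding PkPj by (simp add: vector_ssub_ldistrib sum_subtractf)
      qed
      define T where "T = (\<Sum>a\<in>A. real (m a) *\<^sub>R t a)"
      have "rvec (y k - y j) = (\<Sum>a\<in>A. real (m a) *\<^sub>R (rvec a - rvec (v ?N)))"
        unfolding ydiff by (simp add: vec_eq_iff sum_component algebra_simps)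
      also have "\<dots> = (\<Sum>a\<in>A. real (m a) *\<^sub>R f (t a))"
      proof (rule sum.cong)
        fix a assume "a \<in> A"
        then have "rvec a = rvec (v ?N) + f (t a)" by (rule t_eq)
        then have "rvec a - rvec (v ?N) = f (t a)" by (metis add_diff_cancel_left')
        then show "real (m a) *\<^sub>R (rvec a - rvec (v ?N)) = real (m a) *\<^sub>R f (t a)" by simp
      qed simp
      also have "\<dots> = f T"
        by (simp add: T_def linear_sum[OF lin] linear_scale[OF lin])
      finally have "f (rvec \<kappa>) = f T" using \<kappa> by (simp add: rvec_diff)
      then have \<kappa>T: "rvec \<kappa> = T" using finj by (simp add: inj_eq)
      have \<kappa>nn: "0 \<le> \<kappa> $ j'" for j'
      proof -
        have "0 \<le> T $ j'" unfolding T_def sum_component using t_nn by (auto intro!: sum_nonneg)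
        then show ?thesis using \<kappa>T by (metis rvec_nth of_int_0_le_iff)
      qed
      have \<kappa>sum: "(\<Sum>j'\<in>UNIV. \<kappa> $ j') \<le> int k - int j"
      proof -
        have "(\<Sum>j'\<in>UNIV. T $ j') = (\<Sum>a\<in>A. real (m a) * (\<Sum>j'\<in>UNIV. t a $ j'))"
          unfolding T_def sum_component by (simp add: sum_distrib_left) (rule sum.swap)
        also have "\<dots> \<le> (\<Sum>a\<in>A. real (m a))"
        proof (rule sum_mono)
          fix a assume "a \<in> A"
          then have "(\<Sum>j'\<in>UNIV. t a $ j') \<le> 1" by (rule t_sum)
          then show "real (m a) * (\<Sum>j'\<in>UNIV. t a $ j') \<le> real (m a)"
            by (intro mult_left_le) auto
        qed
        also have "\<dots> = real_of_int (\<Sum>a\<in>A. int (m a))" by simp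
        also have "\<dots> = real_of_int (int k - int j)" by (simp only: summ)
        finally have "real_of_int (\<Sum>j'\<in>UNIV. \<kappa> $ j') \<le> real_of_int (int k - int j)"
          using \<kappa>T by (simp add: vec_eq_iff flip: rvec_nth)
        then show ?thesis by linarith
      qed
      have yk: "y k - y j = (\<Sum>j'\<in>UNIV. \<kappa>$j' *s (v (e j') - v ?N))"
      proof -
        have "rvec (y k - y j) = rvec (\<Sum>j'\<in>UNIV. \<kappa>$j' *s (v (e j') - v ?N))"
          using \<kappa> intg[of \<kappa>] by (simp add: rvec_diff)
        then show ?thesis by (simp add: rvec_eq_iff)
      qed
      define c where "c i = (if i = ?N then (int k - int j) - (\<Sum>j'\<in>UNIV. \<kappa>$j') else \<kappa> $ (inv e i))" for i
      have eN: "e j' \<noteq> ?N" for j' using eI[of j'] by auto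
      have c_e: "c (e j') = \<kappa> $ j'" for j' using eN by (simp add: c_def inv_f_f[OF einj])
      have cN: "c ?N = (int k - int j) - (\<Sum>j'\<in>UNIV. \<kappa>$j')" by (simp add: c_def)
      have cN': "c (Suc CARD('d)) = (int k - int j) - (\<Sum>j'\<in>UNIV. \<kappa>$j')" by (simp add: c_def)
      have Isplit: "?I = insert ?N (range e)"
      proof -
        have "range e = {1..CARD('d)}" using e by (simp add: bij_betw_def)
        then show ?thesis by auto
      qed
      have Nnot: "?N \<notin> range e" using eN by (metis rangeE)
      have sumI: "(\<Sum>i\<in>?I. g i) = g ?N + (\<Sum>j'\<in>UNIV. g (e j'))" for g :: "nat \<Rightarrow> 'x::comm_monoid_add"
        unfolding Isplit using Nnot einj by (simp add: sum.reindex)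
      have Qfst: "(\<Sum>i\<in>?I. c i *s v i) = P k - P j"
      proof -
        have "P k - P j = (y k - y j) + (int k - int j) *s v ?N" by (simp add: y_def algebra_simps vector_sub_rdistrib)
        also have "\<dots> = (\<Sum>j'\<in>UNIV. \<kappa>$j' *s (v (e j') - v ?N)) + (int k - int j) *s v ?N" by (simp add: yk)
        also have "\<dots> = c ?N *s v ?N + (\<Sum>j'\<in>UNIV. c (e j') *s v (e j'))"
          by (simp add: c_e cN cN' vec_eq_iff sum_component algebra_simps sum_subtractf sum_distrib_right)
        finally show ?thesis by (subst sumI) simp
      qed
      have Qsnd: "(\<Sum>i\<in>?I. c i) = int k - int j" by (subst sumI) (simp add: c_e cN cN')
      have cnn: "c i \<ge> 0" if iI: "i \<in> ?I" for i
      proof (cases "i = ?N")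
        case True then show ?thesis using \<kappa>sum by (simp add: c_def)
      next
        case False
        then obtain j' where "i = e j'" using iI Isplit by blast
        then show ?thesis using c_e \<kappa>nn by simp
      qed
      obtain i0 where i0: "i0 \<in> ?I" "c i0 \<ge> 1"
      proof (cases "c ?N \<ge> 1")
        case True then show ?thesis using that[of ?N] by simp
      next
        case False
        then have "c ?N = 0" using cnn[of ?N] by simp
        then have "(\<Sum>j'\<in>UNIV. \<kappa> $ j') = int k - int j" by (simp add: c_def)
        then have s1: "(\<Sum>j'\<in>UNIV. \<kappa> $ j') \<ge> 1" using jk by simp
        have "\<exists>j'. \<kappa> $ j' \<ge> 1"
        proof (rule ccontr)
          assume "\<not> ?thesis"
          then have "\<kappa> $ j' \<le> 0" for j' by (metis not_le zle_add1_eq_le add.left_neutral)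
          then have "(\<Sum>j'\<in>UNIV. \<kappa> $ j') \<le> 0" by (simp add: sum_nonpos)
          with s1 show False by simp
        qed
        then obtain j' where "\<kappa> $ j' \<ge> 1" by blast
        then show ?thesis using that[of "e j'"] c_e[of j'] eI[of j'] by auto
      qed
      define c' where "c' i = c i - (if i = i0 then 1 else 0)" for i
      have delta: "(\<Sum>i\<in>?I. (if i = i0 then 1 else 0) *s v i) = v i0"
      proof -
        have "(\<Sum>i\<in>?I. (if i = i0 then 1 else 0) *s v i) = (\<Sum>i\<in>?I. (if i = i0 then v i else 0))"
          by (rule sum.cong) auto
        also have "\<dots> = v i0" using i0(1) by simp
        finally show ?thesis .
      qed
      have delta2: "(\<Sum>i\<in>?I. (if i = i0 then 1 else 0::int)) = 1" using i0(1) by simp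
      have Q1: "(P k - P j, int k - int j) - lift (v i0) = (\<Sum>i\<in>?I. c' i *s v i, \<Sum>i\<in>?I. c' i)"
        using Qfst Qsnd delta delta2
        by (simp add: c'_def lift_def vector_sub_rdistrib sum_subtractf)
      have Q2: "(\<Sum>i\<in>?I. c' i *s v i, \<Sum>i\<in>?I. c' i) \<in> coneA A"
        by (rule cone_combo[OF assms(1)]) (use vA cnn i0 in \<open>auto simp: c'_def\<close>)
      have nk: "ch k a \<le> n0 a" for a using ch2[of k h a] jk ch3 by simp
      have decomp: "(\<alpha>, M) - lift (v i0) =
          ((\<Sum>a\<in>A. int (n0 a - ch k a) *s a, \<Sum>a\<in>A. int (n0 a - ch k a))
          + (\<Sum>a\<in>A. int (ch j a) *s a, \<Sum>a\<in>A. int (ch j a)))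
          + ((P k - P j, int k - int j) - lift (v i0))"
      proof -
        have i1: "int (n0 a - ch k a) = int (n0 a) - int (ch k a)" for a using nk[of a] by (simp add: of_nat_diff)
        have "(\<Sum>a\<in>A. int (n0 a - ch k a) *s a) = \<alpha> - P k"
          by (simp add: n0 P_def i1 vector_sub_rdistrib sum_subtractf)
        moreover have "(\<Sum>a\<in>A. int (n0 a - ch k a)) = M - int k"
          by (simp add: n0 i1 sum_subtractf sumk)
        moreover have "(\<Sum>a\<in>A. int (ch j a) *s a) = P j" by (simp add: P_def)
        ultimately show ?thesis using sumj by (simp add: lift_def)
      qed
      have "(\<alpha>, M) - lift (v i0) \<in> coneA A"
        unfolding decomp Q1 by (intro cone_add cone_mem Q2)
      then show False using nomin i0(1) by blast
    qed
  qed
  show ?thesis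
  proof
    show "\<forall>\<alpha> M. minimal_elem A v \<pi> (\<alpha>, M) \<longrightarrow>
            real_of_int M \<le> measure lebesgue (convex hull (rvec ` A)) * fact CARD('d) - 1"
      using bound by (simp add: D_def)
    define B where "B = nat \<lceil>D\<rceil>"
    define F where "F n = (\<Sum>a\<in>A. int (n a) *s a, \<Sum>a\<in>A. int (n a))" for n :: "int^'d \<Rightarrow> nat"
    have "{p. minimal_elem A v \<pi> p} \<subseteq> F ` (PiE A (\<lambda>_. {0..B}))"
    proof
      fix p assume "p \<in> {p. minimal_elem A v \<pi> p}"
      moreover obtain \<alpha> M where p: "p = (\<alpha>, M)" by (cases p)
      ultimately have min: "minimal_elem A v \<pi> (\<alpha>, M)" by simp
      have b: "real_of_int M \<le> D - 1" by (rule bound[OF min])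
      have "(\<alpha>, M) \<in> coneA A" using min by (simp add: minimal_elem_def S_pi_def)
      then obtain n0 where n0: "\<alpha> = (\<Sum>a\<in>A. int (n0 a) *s a)" "M = (\<Sum>a\<in>A. int (n0 a))"
        by (auto simp: coneA_def)
      have "n0 a \<le> B" if "a \<in> A" for a
      proof -
        have "n0 a \<le> sum n0 A" using member_le_sum[OF that _ assms(1), of n0] by simp
        moreover have "real (sum n0 A) \<le> D" using b n0(2) by simp
        ultimately have "real (n0 a) \<le> real_of_int \<lceil>D\<rceil>"
          by (meson le_of_int_ceiling of_nat_le_iff order_trans)
        then show ?thesis unfolding B_def by linarith
      qed
      then have "restrict n0 A \<in> PiE A (\<lambda>_. {0..B})" by auto
      moreover have "F (restrict n0 A) = p"
        unfolding F_def p n0 by (simp cong: sum.cong)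
      ultimately show "p \<in> F ` (PiE A (\<lambda>_. {0..B}))" by (metis image_eqI)
    qed
    then show "finite {p. minimal_elem A v \<pi> p}"
      by (rule finite_subset) (intro finite_imageI finite_PiE assms(1) finite_atLeastAtMost)
  qed
qed


end
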